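(* Let $\lambda>0$, $\mathbf{A}\in\mathbb{R}^{m\times n}$ with columns $\mathbf{a}_1,\dots,\mathbf{a}_n$, let $f:\mathbb{R}^m\to\mathbb{R}\cup\{+\infty\}$ be proper, closed and convex, and let $h:\mathbb{R}\to\mathbb{R}\cup\{+\infty\}$ be proper, closed and convex with $0\in\mathrm{dom}(h)$, $h(0)=0$, and $0$ an accumulation point of $\mathrm{dom}(h)$. Let $\nu=(\mathcal{S}_0,\mathcal{S}_1,\mathcal{S}_\bullet)$ and $\nu'=(\mathcal{S}_0',\mathcal{S}_1',\mathcal{S}_\bullet')$ be partitions of $\{1,\dots,n\}$ with $\mathcal{S}_0\subseteq\mathcal{S}_0'$ and $\mathcal{S}_1\subseteq\mathcal{S}_1'$. Then for all $\mathbf{u}\in\mathbb{R}^m$, $$D^{\nu'}(\mathbf{u})=D^\nu(\mathbf{u})+\sum_{i\in\mathcal{S}_0'\setminus\mathcal{S}_0}\phi_0(\mathbf{a}_i^\top\mathbf{u})+\sum_{i\in\mathcal{S}_1'\setminus\mathcal{S}_1}\phi_1(\mathbf{a}_i^\top\mathbf{u}).$$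
   Context: $\|\mathbf{x}\|_0$ is the number of nonzero entries of $\mathbf{x}$; $\eta(\text{condition})=0$ if the condition holds and $+\infty$ otherwise; $\omega^*$ denotes the convex conjugate of a function $\omega$. An accumulation point $0$ of a set $\mathcal{C}\subseteq\mathbb{R}$: every neighborhood of $0$ contains a point of $\mathcal{C}$ other than $0$. For a partition $\nu=(\mathcal{S}_0,\mathcal{S}_1,\mathcal{S}_\bullet)$ of $\{1,\dots,n\}$: $\mathcal{X}^\nu=\{\mathbf{x}\in\mathbb{R}^n: x_i=0\ \forall i\in\mathcal{S}_0,\ x_i\neq0\ \forall i\in\mathcal{S}_1\}$; $g^\nu(\mathbf{x})=\lambda\|\mathbf{x}\|_0+\sum_{i=1}^n h(x_i)+\eta(\mathbf{x}\in\mathcal{X}^\nu)$; and $D^\nu(\mathbf{u})=-f^*(-\mathbf{u})-(g^\nu)^*(\mathbf{A}^\top\mathbf{u})$ for $\mathbf{u}\in\mathbb{R}^m$. The functions $\phi_0,\phi_1:\mathbb{R}\to\mathbb{R}\cup\{+\infty\}$ are $\phi_0(v)=\max(h^*(v)-\lambda,0)$ and $\phi_1(v)=\max(\lambda-h^*(v),0)$. *)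

theory Defs
  imports "HOL-Analysis.Analysis"
begin

definition proper_fun :: "('a \<Rightarrow> ereal) \<Rightarrow> bool" where
  "proper_fun f \<longleftrightarrow> (\<forall>x. f x \<noteq> -\<infinity>) \<and> (\<exists>x. f x < \<infinity>)"

definition epigraph_e :: "('a \<Rightarrow> ereal) \<Rightarrow> ('a \<times> real) set" where
  "epigraph_e f = {(x, r). f x \<le> ereal r}"

definition convex_fun :: "('a::real_vector \<Rightarrow> ereal) \<Rightarrow> bool" where
  "convex_fun f \<longleftrightarrow> convex (epigraph_e f)"

definition closed_fun :: "('a::topological_space \<Rightarrow> ereal) \<Rightarrow> bool" where
  "closed_fun f \<longleftrightarrow> closed (epigraph_e f)"

definition edom :: "('a \<Rightarrow> ereal) \<Rightarrow> 'a set" where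
  "edom f = {x. f x < \<infinity>}"

definition conj :: "('a::real_inner \<Rightarrow> ereal) \<Rightarrow> 'a \<Rightarrow> ereal" where
  "conj f y = (SUP x. ereal (x \<bullet> y) - f x)"

definition l0 :: "real ^ 'n \<Rightarrow> nat" where
  "l0 x = card {i. x $ i \<noteq> 0}"

definition partition3 :: "'n set \<times> 'n set \<times> 'n set \<Rightarrow> bool" where
  "partition3 \<nu> = (case \<nu> of (S0, S1, Sb) \<Rightarrow>
     S0 \<inter> S1 = {} \<and> S0 \<inter> Sb = {} \<and> S1 \<inter> Sb = {} \<and> S0 \<union> S1 \<union> Sb = UNIV)"

definition Xnu :: "'n set \<times> 'n set \<times> 'n set \<Rightarrow> (real ^ 'n) set" where
  "Xnu \<nu> = (case \<nu> of (S0, S1, Sb) \<Rightarrow>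
     {x. (\<forall>i\<in>S0. x $ i = 0) \<and> (\<forall>i\<in>S1. x $ i \<noteq> 0)})"

definition gnu :: "real \<Rightarrow> (real \<Rightarrow> ereal) \<Rightarrow> 'n set \<times> 'n set \<times> 'n set
                   \<Rightarrow> real ^ 'n \<Rightarrow> ereal" where
  "gnu lam h \<nu> x = ereal (lam * real (l0 x)) + (\<Sum>i\<in>UNIV. h (x $ i))
                   + (if x \<in> Xnu \<nu> then 0 else \<infinity>)"

definition Dnu :: "(real ^ 'm \<Rightarrow> ereal) \<Rightarrow> real \<Rightarrow> (real \<Rightarrow> ereal) \<Rightarrow> real ^ 'n ^ 'm
                   \<Rightarrow> 'n set \<times> 'n set \<times> 'n set \<Rightarrow> real ^ 'm \<Rightarrow> ereal" where
  "Dnu f lam h A \<nu> u = - conj f (- u) - conj (gnu lam h \<nu>) (transpose A *v u)"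

definition phi0 :: "real \<Rightarrow> (real \<Rightarrow> ereal) \<Rightarrow> real \<Rightarrow> ereal" where
  "phi0 lam h v = max (conj h v - ereal lam) 0"

definition phi1 :: "real \<Rightarrow> (real \<Rightarrow> ereal) \<Rightarrow> real \<Rightarrow> ereal" where
  "phi1 lam h v = max (ereal lam - conj h v) 0"

end

theory Submission
  imports Defs
begin


lemma SUP_add_directed_ne:
  fixes f g :: "'a \<Rightarrow> ereal"
  assumes I: "I \<noteq> {}" and nf: "\<And>i. i\<in>I \<Longrightarrow> f i \<noteq> -\<infinity>" and ng: "\<And>i. i\<in>I \<Longrightarrow> g i \<noteq> -\<infinity>"
   and directed: "\<And>i j. i\<in>I \<Longrightarrow> j\<in>I \<Longrightarrow> \<exists>k\<in>I. f i + g j \<le> f k + g k"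
  shows "(SUP i\<in>I. f i) + (SUP i\<in>I. g i) \<le> (SUP i\<in>I. f i + g i)"
proof -
    have "bot < (SUP i\<in>I. g i)"
      using I ng by (auto simp: bot_ereal_def less_SUP_iff)
    then have "(SUP i\<in>I. f i) + (SUP i\<in>I. g i) = (SUP i\<in>I. f i + (SUP i\<in>I. g i))"
      by (intro SUP_ereal_add_left[symmetric] I) auto
    also have "\<dots> = (SUP i\<in>I. (SUP j\<in>I. f i + g j))"
      using nf I by (simp add: SUP_ereal_add_right)
    also have "\<dots> \<le> (SUP i\<in>I. f i + g i)"
      using directed by (intro SUP_least) (blast intro: SUP_upper2)
    finally show ?thesis .
qed

lemma sum_ne_minf:
  fixes f :: "'a \<Rightarrow> ereal"
  shows "(\<And>i. i \<in> N \<Longrightarrow> f i \<noteq> -\<infinity>) \<Longrightarrow> sum f N \<noteq> -\<infinity>"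
  by (induction N rule: infinite_finite_induct) auto

lemma sup_sum_swap:
  fixes G :: "'n::finite \<Rightarrow> real \<Rightarrow> ereal"
  assumes ne: "\<And>i. \<exists>t. G i t \<noteq> -\<infinity>"
  shows "(SUP x::real^'n. \<Sum>i\<in>UNIV. G i (x$i)) = (\<Sum>i\<in>UNIV. SUP t. G i t)"
proof (rule antisym)
  show "(SUP x::real^'n. \<Sum>i\<in>UNIV. G i (x$i)) \<le> (\<Sum>i\<in>UNIV. SUP t. G i t)"
    by (intro SUP_least sum_mono SUP_upper) auto
next
  define I where "I = {x::real^'n. \<forall>i. G i (x$i) \<noteq> -\<infinity>}"
  define x0 :: "real^'n" where "x0 = (\<chi> i. SOME t. G i t \<noteq> -\<infinity>)"
  have x0: "x0 \<in> I" unfolding I_def x0_def by (simp add: someI_ex[OF ne])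
  hence Ine: "I \<noteq> {}" by auto
  have comp: "(SUP x\<in>I. G n (x$n)) = (SUP t. G n t)" for n
  proof (rule antisym)
    show "(SUP x\<in>I. G n (x$n)) \<le> (SUP t. G n t)"
      by (intro SUP_least SUP_upper) auto
    show "(SUP t. G n t) \<le> (SUP x\<in>I. G n (x$n))"
    proof (rule SUP_least)
      fix t
      show "G n t \<le> (SUP x\<in>I. G n (x$n))"
      proof (cases "G n t = -\<infinity>")
        case False
        define y :: "real^'n" where "y = (\<chi> j. if j = n then t else x0$j)"
        have "y \<in> I" using False x0 unfolding I_def y_def by auto
        moreover have "G n (y$n) = G n t" unfolding y_def by simp
        ultimately show ?thesis by (metis SUP_upper)
      qed simp
    qed
  qed
  have "(SUP x\<in>I. \<Sum>n\<in>N. G n (x$n)) \<ge> (\<Sum>n\<in>N. SUP x\<in>I. G n (x$n))" for N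
  proof (induction N rule: infinite_finite_induct)
    case (infinite A)
    then show ?case by simp
  next
    case empty
    then show ?case using Ine by simp
  next
    case (insert n N)
    have "(\<Sum>m\<in>insert n N. SUP x\<in>I. G m (x$m)) = (SUP x\<in>I. G n (x$n)) + (\<Sum>m\<in>N. SUP x\<in>I. G m (x$m))"
      using insert by simp
    also have "\<dots> \<le> (SUP x\<in>I. G n (x$n)) + (SUP x\<in>I. \<Sum>m\<in>N. G m (x$m))"
      using insert by (intro add_mono) auto
    also have "\<dots> \<le> (SUP x\<in>I. G n (x$n) + (\<Sum>m\<in>N. G m (x$m)))"
    proof (rule SUP_add_directed_ne[OF Ine])
      fix x assume "x \<in> I"
      thus "G n (x$n) \<noteq> -\<infinity>" "(\<Sum>m\<in>N. G m (x$m)) \<noteq> -\<infinity>"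
        unfolding I_def by (auto intro!: sum_ne_minf)
    next
      fix x y assume xy: "x \<in> I" "y \<in> I"
      define k :: "real^'n" where "k = (\<chi> j. if j = n then x$n else y$j)"
      have "k \<in> I" using xy unfolding I_def k_def by auto
      moreover have "G n (x$n) + (\<Sum>m\<in>N. G m (y$m)) = G n (k$n) + (\<Sum>m\<in>N. G m (k$m))"
        unfolding k_def using insert(2) by (simp, intro arg_cong[where f="\<lambda>s. G n (x$n) + s"] sum.cong) auto
      ultimately show "\<exists>k\<in>I. G n (x$n) + (\<Sum>m\<in>N. G m (y$m)) \<le> G n (k$n) + (\<Sum>m\<in>N. G m (k$m))"
        by (metis order_refl)
    qed
    also have "\<dots> = (SUP x\<in>I. \<Sum>m\<in>insert n N. G m (x$m))"
      using insert by simp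
    finally show ?case .
  qed
  hence "(\<Sum>n\<in>UNIV. SUP t. G n t) \<le> (SUP x\<in>I. \<Sum>n\<in>UNIV. G n (x$n))"
    using comp by simp
  also have "\<dots> \<le> (SUP x::real^'n. \<Sum>i\<in>UNIV. G i (x$i))"
    by (intro SUP_subset_mono) auto
  finally show "(\<Sum>i\<in>UNIV. SUP t. G i t) \<le> (SUP x::real^'n. \<Sum>i\<in>UNIV. G i (x$i))" .
qed

lemma ereal_sum_minus:
  fixes b :: "'a \<Rightarrow> ereal"
  assumes "finite N" "\<And>i. i \<in> N \<Longrightarrow> b i \<noteq> -\<infinity>"
  shows "ereal (\<Sum>i\<in>N. a i) - (\<Sum>i\<in>N. b i) = (\<Sum>i\<in>N. ereal (a i) - b i)"
  using assms
proof (induction N rule: finite_induct)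
  case empty then show ?case by (simp add: zero_ereal_def)
next
  case (insert n N)
  have bn: "b n \<noteq> -\<infinity>" and bs: "(\<Sum>i\<in>N. b i) \<noteq> -\<infinity>" using insert by (auto intro!: sum_ne_minf)
  have "ereal (\<Sum>i\<in>insert n N. a i) - (\<Sum>i\<in>insert n N. b i)
      = ereal (a n + (\<Sum>i\<in>N. a i)) - (b n + (\<Sum>i\<in>N. b i))" using insert by simp
  also have "\<dots> = (ereal (a n) - b n) + (ereal (\<Sum>i\<in>N. a i) - (\<Sum>i\<in>N. b i))"
    using bn bs by (cases "b n"; cases "\<Sum>i\<in>N. b i") auto
  also have "\<dots> = (\<Sum>i\<in>insert n N. ereal (a i) - b i)" using insert by simp
  finally show ?case .
qed



lemma conj_nonzero:
  fixes h :: "real \<Rightarrow> ereal"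
  assumes hp: "proper_fun h" and hc: "convex_fun h" and h0: "h 0 = 0"
    and acc: "0 islimpt edom h"
  shows "(SUP t\<in>(- {0}). ereal (t * v) - h t) = conj h v"
proof -
  define S where "S = (SUP t\<in>(- {0}). ereal (t * v) - h t)"
  obtain s where s: "s \<in> edom h" "s \<noteq> 0"
    using acc unfolding islimpt_def by (metis open_UNIV UNIV_I)
  obtain c where c: "h s = ereal c"
    using s hp unfolding edom_def proper_fun_def by (cases "h s") auto
  have epi: "(s, c) \<in> epigraph_e h" "(0, 0) \<in> epigraph_e h"
    using c h0 unfolding epigraph_e_def by auto
  have hth: "h (th * s) \<le> ereal (th * c)" if "0 \<le> th" "th \<le> 1" for th
  proof -
    have "th *\<^sub>R (s, c) + (1 - th) *\<^sub>R (0::real, 0::real) \<in> epigraph_e h"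
      using that by (intro convexD[OF hc[unfolded convex_fun_def] epi]) auto
    thus ?thesis unfolding epigraph_e_def by simp
  qed
  define a where "a = s * v - c"
  have low: "ereal (th * a) \<le> S" if "0 < th" "th \<le> 1" for th
  proof -
    have "ereal (th * a) = ereal (th * s * v) - ereal (th * c)" unfolding a_def by (simp add: algebra_simps)
    also have "\<dots> \<le> ereal (th * s * v) - h (th * s)"
      using hth[of th] that by (intro ereal_minus_mono) auto
    also have "\<dots> \<le> S" unfolding S_def using that s(2) by (intro SUP_upper) auto
    finally show ?thesis .
  qed
  have S0: "0 \<le> S"
  proof (rule ereal_le_epsilon2)
    fix e :: real assume e: "0 < e"
    define th where "th = min 1 (e / (\<bar>a\<bar> + 1))"
    have th: "0 < th" "th \<le> 1" using e unfolding th_def by auto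
    have "th * \<bar>a\<bar> \<le> e"
    proof -
      have "th * \<bar>a\<bar> \<le> (e / (\<bar>a\<bar> + 1)) * \<bar>a\<bar>" using th unfolding th_def
        by (intro mult_right_mono) auto
      also have "\<dots> \<le> e" using e by (simp add: field_simps)
      finally show ?thesis .
    qed
    hence "- e \<le> th * a" using th by (smt (verit) abs_ge_minus_self mult_left_mono mult_minus_right)
    hence "ereal (-e) \<le> S" using low[OF th] by (meson ereal_less_eq(3) order_trans)
    thus "0 \<le> S + ereal e" by (cases S) auto
  qed
  have U: "(UNIV::real set) = insert 0 (- {0})" by auto
  have "conj h v = (SUP t\<in>insert 0 (- {0}). ereal (t * v) - h t)"
    unfolding conj_def inner_real_def by (simp only: U[symmetric])
  also have "\<dots> = sup (ereal (0 * v) - h 0) S" unfolding S_def by (rule SUP_insert)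
  also have "\<dots> = sup 0 S" using h0 by (simp add: zero_ereal_def)
  also have "\<dots> = S" using S0 by (simp add: sup_absorb2)
  finally show ?thesis unfolding S_def ..
qed



definition gi :: "real \<Rightarrow> (real \<Rightarrow> ereal) \<Rightarrow> 'n set \<Rightarrow> 'n set \<Rightarrow> 'n \<Rightarrow> real \<Rightarrow> ereal" where
  "gi lam h S0 S1 i t = ereal (if t = 0 then 0 else lam) + h t
     + (if (i \<in> S0 \<longrightarrow> t = 0) \<and> (i \<in> S1 \<longrightarrow> t \<noteq> 0) then 0 else \<infinity>)"

definition psi :: "real \<Rightarrow> (real \<Rightarrow> ereal) \<Rightarrow> 'n set \<Rightarrow> 'n set \<Rightarrow> 'n \<Rightarrow> real \<Rightarrow> ereal" where
  "psi lam h S0 S1 i v = (if i \<in> S0 then 0 else if i \<in> S1 then conj h v - ereal lam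
     else max (conj h v - ereal lam) 0)"

lemma ind_sum:
  fixes c :: "'n::finite \<Rightarrow> bool"
  shows "(\<Sum>i\<in>UNIV. (if c i then 0 else \<infinity>::ereal)) = (if \<forall>i. c i then 0 else \<infinity>)"
proof (cases "\<forall>i. c i")
  case True then show ?thesis by simp
next
  case False
  have "(\<Sum>i\<in>UNIV. (if c i then 0 else \<infinity>::ereal)) = \<infinity>"
    using False by (subst sum_Pinfty) auto
  then show ?thesis using False by simp
qed

lemma gnu_sum:
  fixes x :: "real^'n::finite"
  shows "gnu lam h (S0,S1,Sb) x = (\<Sum>i\<in>UNIV. gi lam h S0 S1 i (x$i))"
proof -
  have l0: "(\<Sum>i\<in>UNIV. (if x$i = 0 then 0 else lam)) = lam * real (l0 x)"
  proof -
    have "(\<Sum>i\<in>UNIV. (if x$i = 0 then 0 else lam)) = (\<Sum>i\<in>{i. x$i \<noteq> 0}. lam)"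
      by (rule sum.mono_neutral_cong_right) auto
    thus ?thesis unfolding l0_def by simp
  qed
  have X: "(x \<in> Xnu (S0,S1,Sb)) = (\<forall>i. (i \<in> S0 \<longrightarrow> x$i = 0) \<and> (i \<in> S1 \<longrightarrow> x$i \<noteq> 0))"
    unfolding Xnu_def by auto
  have "(\<Sum>i\<in>UNIV. gi lam h S0 S1 i (x$i)) = (\<Sum>i\<in>UNIV. ereal (if x$i = 0 then 0 else lam))
      + (\<Sum>i\<in>UNIV. h (x$i))
      + (\<Sum>i\<in>UNIV. (if (i \<in> S0 \<longrightarrow> x$i = 0) \<and> (i \<in> S1 \<longrightarrow> x$i \<noteq> 0) then 0 else \<infinity>::ereal))"
    unfolding gi_def by (simp add: sum.distrib)
  also have "\<dots> = gnu lam h (S0,S1,Sb) x"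
    unfolding gnu_def ind_sum X sum_ereal l0 by simp
  finally show ?thesis ..
qed

lemma gi_ne:
  assumes "proper_fun h"
  shows "gi lam h S0 S1 i t \<noteq> -\<infinity>"
  using assms unfolding gi_def proper_fun_def by (cases "h t") auto

lemma conj_ge0:
  assumes "h 0 = 0"
  shows "0 \<le> conj h v"
proof -
  have "ereal (0 \<bullet> v) - h 0 \<le> conj h v" unfolding conj_def by (rule SUP_upper) auto
  thus ?thesis using assms by (simp add: zero_ereal_def)
qed

lemma Gsup:
  fixes h :: "real \<Rightarrow> ereal"
  assumes hp: "proper_fun h" and hc: "convex_fun h" and h0: "h 0 = 0"
    and acc: "0 islimpt edom h" and dis: "S0 \<inter> S1 = {}"
  shows "(SUP t. ereal (t * v) - gi lam h S0 S1 i t) = psi lam h S0 S1 i v"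
proof -
  have hne: "h t \<noteq> -\<infinity>" for t using hp unfolding proper_fun_def by auto
  have U: "(UNIV::real set) = insert 0 (- {0})" by auto
  have nz: "ereal (t * v) - gi lam h S0 S1 i t = (ereal (t * v) - h t) - ereal lam"
    if "t \<noteq> 0" "i \<notin> S0" for t
    using that hne[of t] unfolding gi_def by (cases "h t") auto
  have split: "(SUP t. ereal (t * v) - gi lam h S0 S1 i t)
     = sup (ereal (0 * v) - gi lam h S0 S1 i 0) (SUP t\<in>(- {0}). ereal (t * v) - gi lam h S0 S1 i t)"
    unfolding U by (rule SUP_insert)
  show ?thesis
  proof (cases "i \<in> S0")
    case True
    hence "i \<notin> S1" using dis by auto
    have "(SUP t\<in>(- {0}). ereal (t * v) - gi lam h S0 S1 i t) = (SUP t\<in>(- {0::real}). -\<infinity>)"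
      using True by (intro SUP_cong refl) (auto simp: gi_def)
    moreover have "ereal (0 * v) - gi lam h S0 S1 i 0 = 0" using True \<open>i \<notin> S1\<close> h0 by (simp add: gi_def)
    ultimately show ?thesis using True unfolding split psi_def by (simp add: bot_ereal_def[symmetric])
  next
    case False
    have rest: "(SUP t\<in>(- {0}). ereal (t * v) - gi lam h S0 S1 i t) = conj h v - ereal lam"
    proof -
      have "(SUP t\<in>(- {0}). ereal (t * v) - gi lam h S0 S1 i t)
          = (SUP t\<in>(- {0}). (ereal (t * v) - h t) - ereal lam)"
        using False by (intro SUP_cong) (auto simp: nz)
      also have "\<dots> = (SUP t\<in>(- {0}). ereal (t * v) - h t) - ereal lam"
        by (rule SUP_ereal_minus_left) auto
      also have "\<dots> = conj h v - ereal lam" using conj_nonzero[OF hp hc h0 acc] by simp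
      finally show ?thesis .
    qed
    show ?thesis
    proof (cases "i \<in> S1")
      case True
      have "ereal (0 * v) - gi lam h S0 S1 i 0 = -\<infinity>" using True by (simp add: gi_def)
      then show ?thesis using True False unfolding split psi_def rest by (simp add: bot_ereal_def[symmetric])
    next
      case F1: False
      have "ereal (0 * v) - gi lam h S0 S1 i 0 = 0" using F1 False h0 by (simp add: gi_def)
      then show ?thesis using F1 False unfolding split psi_def rest by (simp add: sup_max max.commute)
    qed
  qed
qed

lemma psi_ne:
  assumes "h 0 = 0"
  shows "psi lam h S0 S1 i v \<noteq> -\<infinity>"
  using conj_ge0[where h=h and v=v, OF assms] unfolding psi_def by (cases "conj h v") auto

lemma conj_gnu:
  fixes h :: "real \<Rightarrow> ereal" and w :: "real^'n::finite"
  assumes hp: "proper_fun h" and hc: "convex_fun h" and h0: "h 0 = 0"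
    and acc: "0 islimpt edom h" and dis: "S0 \<inter> S1 = {}"
  shows "conj (gnu lam h (S0,S1,Sb)) w = (\<Sum>i\<in>UNIV. psi lam h S0 S1 i (w$i))"
proof -
  let ?G = "\<lambda>i t. ereal (t * w$i) - gi lam h S0 S1 i t"
  have eq: "ereal (x \<bullet> w) - gnu lam h (S0,S1,Sb) x = (\<Sum>i\<in>UNIV. ?G i (x$i))" for x
    unfolding gnu_sum inner_vec_def inner_real_def
    by (rule ereal_sum_minus) (auto simp: gi_ne[OF hp])
  have sup: "(SUP t. ?G i t) = psi lam h S0 S1 i (w$i)" for i
    using Gsup[OF hp hc h0 acc dis] by simp
  have ne: "\<exists>t. ?G i t \<noteq> -\<infinity>" for i
  proof (rule ccontr)
    assume "\<not> ?thesis"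
    hence "(SUP t. ?G i t) = -\<infinity>" by (simp add: bot_ereal_def[symmetric])
    thus False using sup[of i] psi_ne[where h=h, OF h0] by metis
  qed
  have "conj (gnu lam h (S0,S1,Sb)) w = (SUP x::real^'n. \<Sum>i\<in>UNIV. ?G i (x$i))"
    unfolding conj_def eq ..
  also have "\<dots> = (\<Sum>i\<in>UNIV. SUP t. ?G i t)" by (rule sup_sum_swap[OF ne])
  also have "\<dots> = (\<Sum>i\<in>UNIV. psi lam h S0 S1 i (w$i))" using sup by simp
  finally show ?thesis .
qed



lemma fin_arith:
  fixes F C T P R :: ereal
  assumes "C \<noteq> -\<infinity>" "T \<noteq> -\<infinity>" "P \<ge> 0" "R \<ge> 0" "R \<noteq> \<infinity>"
    "\<not> (F - (C + P + (T + R)) = -\<infinity> \<and> P = \<infinity>)"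
  shows "F - (C + T) = F - (C + P + (T + R)) + P + R"
  using assms by (cases F; cases C; cases T; cases P; cases R) auto

lemma split3:
  fixes p :: "'n::finite \<Rightarrow> ereal"
  assumes "D0 \<inter> D1 = {}"
  shows "(\<Sum>i\<in>UNIV. p i) = (\<Sum>i\<in>UNIV - D0 - D1. p i) + (\<Sum>i\<in>D0. p i) + (\<Sum>i\<in>D1. p i)"
proof -
  have "UNIV = ((UNIV - D0 - D1) \<union> D0) \<union> D1" by auto
  hence "(\<Sum>i\<in>UNIV. p i) = (\<Sum>i\<in>((UNIV - D0 - D1) \<union> D0) \<union> D1. p i)" by simp
  also have "\<dots> = (\<Sum>i\<in>(UNIV - D0 - D1) \<union> D0. p i) + (\<Sum>i\<in>D1. p i)"
    using assms by (intro sum.union_disjoint) auto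
  also have "(\<Sum>i\<in>(UNIV - D0 - D1) \<union> D0. p i) = (\<Sum>i\<in>UNIV - D0 - D1. p i) + (\<Sum>i\<in>D0. p i)"
    by (intro sum.union_disjoint) auto
  finally show ?thesis .
qed

theorem proposition3p3:
  fixes lam :: real
    and A :: "real ^ 'n ^ 'm"
    and f :: "real ^ 'm \<Rightarrow> ereal"
    and h :: "real \<Rightarrow> ereal"
    and S0 S1 Sb S0' S1' Sb' :: "'n set"
  assumes lam_pos: "lam > 0"
    and f_proper: "proper_fun f" and f_closed: "closed_fun f" and f_convex: "convex_fun f"
    and h_proper: "proper_fun h" and h_closed: "closed_fun h" and h_convex: "convex_fun h"
    and h_dom0: "0 \<in> edom h" and h0: "h 0 = 0"
    and h_acc: "0 islimpt edom h"
    and nu: "partition3 (S0, S1, Sb)"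
    and nu': "partition3 (S0', S1', Sb')"
    and sub0: "S0 \<subseteq> S0'" and sub1: "S1 \<subseteq> S1'"
  shows "\<forall>u :: real ^ 'm.
     \<not> (Dnu f lam h A (S0, S1, Sb) u = -\<infinity> \<and>
        (\<Sum>i\<in>S0' - S0. phi0 lam h (column i A \<bullet> u)) = \<infinity>) \<longrightarrow>
     Dnu f lam h A (S0', S1', Sb') u =
       Dnu f lam h A (S0, S1, Sb) u
       + (\<Sum>i\<in>S0' - S0. phi0 lam h (column i A \<bullet> u))
       + (\<Sum>i\<in>S1' - S1. phi1 lam h (column i A \<bullet> u))"
proof (intro allI impI)
  fix u :: "real ^ 'm"
  assume guard: "\<not> (Dnu f lam h A (S0, S1, Sb) u = -\<infinity> \<and>
        (\<Sum>i\<in>S0' - S0. phi0 lam h (column i A \<bullet> u)) = \<infinity>)"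
  define c where "c i = column i A \<bullet> u" for i
  define w where "w = transpose A *v u"
  have wc: "w $ i = c i" for i
    unfolding w_def c_def by (simp add: matrix_vector_mult_def transpose_def column_def inner_vec_def mult.commute)
  have dis: "S0 \<inter> S1 = {}" "S0' \<inter> S1' = {}" using nu nu' unfolding partition3_def by auto
  have Sb_un: "S0 \<union> S1 \<union> Sb = UNIV" "S0' \<union> S1' \<union> Sb' = UNIV" using nu nu' unfolding partition3_def by auto
  define D0 where "D0 = S0' - S0"
  define D1 where "D1 = S1' - S1"
  have D01: "D0 \<inter> D1 = {}" using dis unfolding D0_def D1_def by auto
  let ?p = "\<lambda>i. psi lam h S0 S1 i (c i)"
  let ?p' = "\<lambda>i. psi lam h S0' S1' i (c i)"
  have conjv: "conj (gnu lam h (S0,S1,Sb)) w = (\<Sum>i\<in>UNIV. ?p i)"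
    using conj_gnu[OF h_proper h_convex h0 h_acc dis(1), of lam Sb w] wc by simp
  have conjv': "conj (gnu lam h (S0',S1',Sb')) w = (\<Sum>i\<in>UNIV. ?p' i)"
    using conj_gnu[OF h_proper h_convex h0 h_acc dis(2), of lam Sb' w] wc by simp
  define Cm where "Cm = (\<Sum>i\<in>UNIV - D0 - D1. ?p i)"
  define P where "P = (\<Sum>i\<in>D0. phi0 lam h (c i))"
  define Q where "Q = (\<Sum>i\<in>D1. phi0 lam h (c i))"
  define R where "R = (\<Sum>i\<in>D1. phi1 lam h (c i))"
  define T where "T = (\<Sum>i\<in>D1. conj h (c i) - ereal lam)"
  have e1: "conj (gnu lam h (S0,S1,Sb)) w = Cm + P + Q"
  proof -
    have "(\<Sum>i\<in>D0. ?p i) = P" unfolding P_def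
      using dis sub0 sub1 by (intro sum.cong refl) (auto simp: D0_def psi_def phi0_def)
    moreover have "(\<Sum>i\<in>D1. ?p i) = Q" unfolding Q_def
      using dis sub0 sub1 by (intro sum.cong refl) (auto simp: D1_def psi_def phi0_def)
    ultimately show ?thesis unfolding conjv Cm_def using split3[OF D01, of ?p] by simp
  qed
  have e2: "conj (gnu lam h (S0',S1',Sb')) w = Cm + T"
  proof -
    have "(\<Sum>i\<in>D0. ?p' i) = 0"
      by (intro sum.neutral) (auto simp: D0_def psi_def)
    moreover have "(\<Sum>i\<in>D1. ?p' i) = T" unfolding T_def
      using dis sub0 sub1 by (intro sum.cong refl) (auto simp: D1_def psi_def)
    moreover have "(\<Sum>i\<in>UNIV - D0 - D1. ?p' i) = Cm" unfolding Cm_def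
      using dis sub0 sub1 Sb_un by (intro sum.cong refl) (auto simp: D0_def D1_def psi_def)
    ultimately show ?thesis unfolding conjv' using split3[OF D01, of ?p'] by simp
  qed
  have cge: "0 \<le> conj h (c i)" for i using conj_ge0[where h=h, OF h0] .
  have QTR: "Q = T + R" unfolding Q_def T_def R_def sum.distrib[symmetric]
  proof (intro sum.cong refl)
    fix i
    show "phi0 lam h (c i) = conj h (c i) - ereal lam + phi1 lam h (c i)"
      using cge[of i] unfolding phi0_def phi1_def by (cases "conj h (c i)") (auto simp: max_def)
  qed
  have Cne: "Cm \<noteq> -\<infinity>" unfolding Cm_def by (intro sum_ne_minf psi_ne[where h=h] h0)
  have Tne: "T \<noteq> -\<infinity>" unfolding T_def using cge
  proof (intro sum_ne_minf)
    fix i show "conj h (c i) - ereal lam \<noteq> -\<infinity>" using cge[of i] by (cases "conj h (c i)") auto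
  qed
  have P0: "P \<ge> 0" unfolding P_def phi0_def by (intro sum_nonneg) auto
  have R0: "R \<ge> 0" unfolding R_def phi1_def by (intro sum_nonneg) auto
  have phi1fin: "phi1 lam h (c i) \<noteq> \<infinity>" for i
    using cge[of i] unfolding phi1_def by (cases "conj h (c i)") (auto simp: max_def)
  have Rfin: "R \<noteq> \<infinity>" unfolding R_def using phi1fin by (subst sum_Pinfty) auto
  define F where "F = - conj f (- u)"
  have Dv: "Dnu f lam h A (S0, S1, Sb) u = F - (Cm + P + (T + R))"
    unfolding Dnu_def F_def w_def[symmetric] e1 QTR ..
  have Dv': "Dnu f lam h A (S0', S1', Sb') u = F - (Cm + T)"
    unfolding Dnu_def F_def w_def[symmetric] e2 ..
  have g: "\<not> (F - (Cm + P + (T + R)) = -\<infinity> \<and> P = \<infinity>)"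
    using guard unfolding Dv P_def D0_def c_def .
  have "F - (Cm + T) = F - (Cm + P + (T + R)) + P + R"
    by (rule fin_arith[OF Cne Tne P0 R0 Rfin g])
  thus "Dnu f lam h A (S0', S1', Sb') u =
       Dnu f lam h A (S0, S1, Sb) u
       + (\<Sum>i\<in>S0' - S0. phi0 lam h (column i A \<bullet> u))
       + (\<Sum>i\<in>S1' - S1. phi1 lam h (column i A \<bullet> u))"
    unfolding Dv Dv' P_def R_def D0_def D1_def c_def .
qed


end
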